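(* Let $\mathbf C=(\mathbf C_\tau,q_n^{\mathbf C},\mathsf e_i^{\mathbf C})$ be a minimal clone $\tau$-algebra, let $\mathrm{Var}(\mathbf C_\tau)$ be the variety of $\tau$-algebras generated by $\mathbf C_\tau$ and $\mathrm{Var}(\mathbf C)$ the variety of clone $\tau$-algebras generated by $\mathbf C$. Then: (i) $\mathbf C_\tau$ is the free algebra over a countable set of generators (namely $\{\mathsf e_1^{\mathbf C},\mathsf e_2^{\mathbf C},\dots\}$) in $\mathrm{Var}(\mathbf C_\tau)$; (ii) $\mathbf C$ is the clone $\mathrm{Var}(\mathbf C_\tau)$-algebra; (iii) $\mathbf C$ is the free algebra over an empty set of generators in $\mathrm{Var}(\mathbf C)$.
   Context: A clone $\tau$-algebra is an algebra $\mathbf C=(C,\sigma^{\mathbf C}\ (\sigma\in\tau),q_n^{\mathbf C}\ (n\ge0),\mathsf e_i^{\mathbf C}\ (i\ge1))$ with $\mathsf e_i$ nullary, $q_n$ of arity $n+1$, satisfying: (C1) $q_n(\mathsf e_i,x_1,\dots,x_n)=x_i$ ($1\le i\le n$); (C2) $q_n(\mathsf e_j,x_1,\dots,x_n)=\mathsf e_j$ ($j>n$); (C3) $q_n(x,\mathsf e_1,\dots,\mathsf e_n)=x$; (C4) $q_k(x,y_1,\dots,y_k)=q_n(x,y_1,\dots,y_k,\mathsf e_{k+1},\dots,\mathsf e_n)$ ($n>k$); (C5) $q_n(q_n(x,\mathbf y),\mathbf z)=q_n(x,q_n(y_1,\mathbf z),\dots,q_n(y_n,\mathbf z))$; (C6)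 $q_n(\sigma(x_1,\dots,x_k),\mathbf y)=\sigma(q_n(x_1,\mathbf y),\dots,q_n(x_k,\mathbf y))$ for $\sigma\in\tau$ of arity $k$. $\mathbf C_\tau=(C,\sigma^{\mathbf C})_{\sigma\in\tau}$ is the $\tau$-reduct. $\mathbf C$ is minimal if $C$ equals the smallest subset of $C$ containing all $\mathsf e_i^{\mathbf C}$ and closed under the operations $\sigma^{\mathbf C}$ ($\sigma\in\tau$). For a variety $\mathcal V$ of $\tau$-algebras with free algebra $\mathbf F_{\mathcal V}$ over $\{v_1,v_2,\dots\}$, the clone $\mathcal V$-algebra is $(\mathbf F_{\mathcal V},q_n^{\mathbf F},\mathsf e_i^{\mathbf F})$ with $\mathsf e_i^{\mathbf F}=v_i$ and $q_n^{\mathbf F}(a,b_1,\dots,b_n)=s(a)$, $s$ the unique endomorphism with $s(v_i)=b_i$ ($i\le n$) and $s(v_i)=v_i$ ($i>n$). In (ii), the identification is via the free generators $\mathsf e_i^{\mathbf C}$ playing the role of $v_i$. *)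

theory Defs
  imports Main
begin

text \<open>A signature is a type 'f of operation symbols with an arity function
  ar :: 'f => nat.  An algebra of that signature is a carrier set A together with
  an interpretation I :: 'f => 'a list => 'a (only argument lists of the right
  length inside the carrier matter).\<close>

datatype 'f trm = V nat | Op 'f "'f trm list"

fun wf_trm :: "('f \<Rightarrow> nat) \<Rightarrow> 'f trm \<Rightarrow> bool" where
  "wf_trm ar (V i) = True"
| "wf_trm ar (Op g ts) = (length ts = ar g \<and> (\<forall>t\<in>set ts. wf_trm ar t))"

fun eval :: "('f \<Rightarrow> 'a list \<Rightarrow> 'a) \<Rightarrow> (nat \<Rightarrow> 'a) \<Rightarrow> 'f trm \<Rightarrow> 'a" where
  "eval I env (V i) = env i"
| "eval I env (Op g ts) = I g (map (eval I env) ts)"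

definition algebra :: "('f \<Rightarrow> nat) \<Rightarrow> 'a set \<Rightarrow> ('f \<Rightarrow> 'a list \<Rightarrow> 'a) \<Rightarrow> bool" where
  "algebra ar A I \<longleftrightarrow> A \<noteq> {} \<and>
     (\<forall>g xs. length xs = ar g \<and> set xs \<subseteq> A \<longrightarrow> I g xs \<in> A)"

definition satisfies :: "'a set \<Rightarrow> ('f \<Rightarrow> 'a list \<Rightarrow> 'a) \<Rightarrow> 'f trm \<Rightarrow> 'f trm \<Rightarrow> bool" where
  "satisfies A I s t \<longleftrightarrow> (\<forall>env. (\<forall>i. env i \<in> A) \<longrightarrow> eval I env s = eval I env t)"

text \<open>Membership of (B, J) in the variety generated by (A, I): the variety generated
  by an algebra is the equational class of all algebras satisfying every identity
  (between well-formed terms) that holds in (A, I)  (= HSP(A) by Birkhoff).\<close>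
definition in_Var :: "('f \<Rightarrow> nat) \<Rightarrow> 'a set \<Rightarrow> ('f \<Rightarrow> 'a list \<Rightarrow> 'a)
     \<Rightarrow> 'b set \<Rightarrow> ('f \<Rightarrow> 'b list \<Rightarrow> 'b) \<Rightarrow> bool" where
  "in_Var ar A I B J \<longleftrightarrow> algebra ar B J \<and>
     (\<forall>s t. wf_trm ar s \<and> wf_trm ar t \<and> satisfies A I s t \<longrightarrow> satisfies B J s t)"

definition hom :: "('f \<Rightarrow> nat) \<Rightarrow> 'a set \<Rightarrow> ('f \<Rightarrow> 'a list \<Rightarrow> 'a)
     \<Rightarrow> 'b set \<Rightarrow> ('f \<Rightarrow> 'b list \<Rightarrow> 'b) \<Rightarrow> ('a \<Rightarrow> 'b) \<Rightarrow> bool" where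
  "hom ar A I B J h \<longleftrightarrow> (\<forall>x\<in>A. h x \<in> B) \<and>
     (\<forall>g xs. length xs = ar g \<and> set xs \<subseteq> A \<longrightarrow> h (I g xs) = J g (map h xs))"

text \<open>A clone tau-algebra is given by a carrier C, the tau-operations f, the
  operations q n (of arity n+1, written q n x [y1,...,yn]) and the nullary e i
  (for i >= 1; the value e 0 is unused junk).\<close>

definition clone_algebra :: "('f \<Rightarrow> nat) \<Rightarrow> 'a set \<Rightarrow> ('f \<Rightarrow> 'a list \<Rightarrow> 'a)
     \<Rightarrow> (nat \<Rightarrow> 'a \<Rightarrow> 'a list \<Rightarrow> 'a) \<Rightarrow> (nat \<Rightarrow> 'a) \<Rightarrow> bool" where
  "clone_algebra ar C f q e \<longleftrightarrow>
     algebra ar C f \<and>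
     (\<forall>i\<ge>1. e i \<in> C) \<and>
     (\<forall>n x ys. x \<in> C \<and> length ys = n \<and> set ys \<subseteq> C \<longrightarrow> q n x ys \<in> C) \<and>
     \<comment> \<open>(C1)\<close>
     (\<forall>n i xs. length xs = n \<and> set xs \<subseteq> C \<and> 1 \<le> i \<and> i \<le> n \<longrightarrow> q n (e i) xs = xs ! (i - 1)) \<and>
     \<comment> \<open>(C2)\<close>
     (\<forall>n j xs. length xs = n \<and> set xs \<subseteq> C \<and> n < j \<longrightarrow> q n (e j) xs = e j) \<and>
     \<comment> \<open>(C3)\<close>
     (\<forall>n x. x \<in> C \<longrightarrow> q n x (map e [1..<n+1]) = x) \<and>
     \<comment> \<open>(C4)\<close>
     (\<forall>n k x ys. k < n \<and> x \<in> C \<and> length ys = k \<and> set ys \<subseteq> C \<longrightarrow>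
        q k x ys = q n x (ys @ map e [k+1..<n+1])) \<and>
     \<comment> \<open>(C5)\<close>
     (\<forall>n x ys zs. x \<in> C \<and> length ys = n \<and> set ys \<subseteq> C \<and> length zs = n \<and> set zs \<subseteq> C \<longrightarrow>
        q n (q n x ys) zs = q n x (map (\<lambda>y. q n y zs) ys)) \<and>
     \<comment> \<open>(C6)\<close>
     (\<forall>n g xs ys. length xs = ar g \<and> set xs \<subseteq> C \<and> length ys = n \<and> set ys \<subseteq> C \<longrightarrow>
        q n (f g xs) ys = f g (map (\<lambda>x. q n x ys) xs))"

inductive_set gen_by_e :: "('f \<Rightarrow> nat) \<Rightarrow> ('f \<Rightarrow> 'a list \<Rightarrow> 'a) \<Rightarrow> (nat \<Rightarrow> 'a) \<Rightarrow> 'a set"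
  for ar f e where
  gen_e: "1 \<le> i \<Longrightarrow> e i \<in> gen_by_e ar f e"
| gen_op: "length xs = ar g \<Longrightarrow> \<forall>x\<in>set xs. x \<in> gen_by_e ar f e \<Longrightarrow> f g xs \<in> gen_by_e ar f e"

definition minimal_clone_algebra :: "('f \<Rightarrow> nat) \<Rightarrow> 'a set \<Rightarrow> ('f \<Rightarrow> 'a list \<Rightarrow> 'a)
     \<Rightarrow> (nat \<Rightarrow> 'a \<Rightarrow> 'a list \<Rightarrow> 'a) \<Rightarrow> (nat \<Rightarrow> 'a) \<Rightarrow> bool" where
  "minimal_clone_algebra ar C f q e \<longleftrightarrow> clone_algebra ar C f q e \<and> C = gen_by_e ar f e"

text \<open>The signature of clone tau-algebras: the tau-symbols, q_n (arity n+1) and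
  the constants; the constructor E k denotes the constant e_(k+1).\<close>
datatype 'f clone_op = Sig 'f | Q nat | E nat

fun clone_ar :: "('f \<Rightarrow> nat) \<Rightarrow> 'f clone_op \<Rightarrow> nat" where
  "clone_ar ar (Sig g) = ar g"
| "clone_ar ar (Q n) = Suc n"
| "clone_ar ar (E k) = 0"

fun clone_int :: "('f \<Rightarrow> 'a list \<Rightarrow> 'a) \<Rightarrow> (nat \<Rightarrow> 'a \<Rightarrow> 'a list \<Rightarrow> 'a) \<Rightarrow> (nat \<Rightarrow> 'a)
     \<Rightarrow> 'f clone_op \<Rightarrow> 'a list \<Rightarrow> 'a" where
  "clone_int f q e (Sig g) xs = f g xs"
| "clone_int f q e (Q n) xs = q n (hd xs) (tl xs)"
| "clone_int f q e (E k) xs = e (Suc k)"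

end

theory Submission
  imports Defs
begin

fun bnd :: "'f trm \<Rightarrow> nat" where
  "bnd (V i) = Suc i"
| "bnd (Op g ts) = sum_list (map bnd ts)"

fun ground :: "'f trm \<Rightarrow> bool" where
  "ground (V i) = False"
| "ground (Op g ts) = (\<forall>t\<in>set ts. ground t)"

lemma eval_bnd:
  "(\<forall>i<bnd t. env i = env' i) \<Longrightarrow> eval I env t = eval I env' t"
proof (induction t)
  case (V x) then show ?case by simp
next
  case (Op g ts)
  have "\<forall>t\<in>set ts. eval I env t = eval I env' t"
  proof
    fix t assume t: "t \<in> set ts"
    have "bnd t \<le> sum_list (map bnd ts)" using t by (simp add: member_le_sum_list)
    then show "eval I env t = eval I env' t" using Op t by auto
  qed
  then have "map (eval I env) ts = map (eval I env') ts" by simp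
  then show ?case by (metis eval.simps(2))
qed

lemma eval_ground: "ground t \<Longrightarrow> eval I env t = eval I env' t"
proof (induction t)
  case (Op g ts)
  then have "map (eval I env) ts = map (eval I env') ts" by simp
  then show ?case by (metis eval.simps(2))
qed simp

lemma eval_closed:
  "algebra ar A I \<Longrightarrow> wf_trm ar t \<Longrightarrow> (\<forall>i. env i \<in> A) \<Longrightarrow> eval I env t \<in> A"
proof (induction t)
  case (V x) then show ?case by simp
next
  case (Op g ts)
  have "set (map (eval I env) ts) \<subseteq> A" using Op by auto
  moreover have "length (map (eval I env) ts) = ar g" using Op by simp
  ultimately show ?case using Op.prems(1) unfolding algebra_def by simp
qed

lemma hom_unique:
  assumes "hom ar (gen_by_e ar f e) f B J h" "hom ar (gen_by_e ar f e) f B J h'"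
    "\<forall>i\<ge>1. h (e i) = h' (e i)"
    "x \<in> gen_by_e ar f e"
  shows "h x = h' x"
  using assms(4)
proof (induction x rule: gen_by_e.induct)
  case (gen_e i) then show ?case using assms(3) by auto
next
  case (gen_op xs g)
  have s: "set xs \<subseteq> gen_by_e ar f e" using gen_op by auto
  have "h (f g xs) = J g (map h xs)" using assms(1) gen_op s unfolding hom_def by blast
  also have "map h xs = map h' xs" using gen_op by auto
  also have "J g (map h' xs) = h' (f g xs)" using assms(2) gen_op s unfolding hom_def by metis
  finally show ?case .
qed

lemma key:
  assumes ca: "clone_algebra ar C f q e"
  shows "wf_trm ar t \<Longrightarrow> length bs = n \<Longrightarrow> set bs \<subseteq> C \<Longrightarrow>
     q n (eval f (\<lambda>i. e (Suc i)) t) bs = eval f (\<lambda>i. if i < n then bs ! i else e (Suc i)) t"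
proof (induction t)
  case (V i)
  show ?case
  proof (cases "Suc i \<le> n")
    case True
    then show ?thesis using ca V unfolding clone_algebra_def by auto
  next
    case False
    then show ?thesis using ca V unfolding clone_algebra_def by auto
  qed
next
  case (Op g ts)
  have alg: "algebra ar C f" and ec: "\<forall>i. e (Suc i) \<in> C" using ca unfolding clone_algebra_def by auto
  have sub: "set (map (eval f (\<lambda>i. e (Suc i))) ts) \<subseteq> C"
    using eval_closed[OF alg _ ec] Op.prems by auto
  have C6: "\<forall>n g xs ys. length xs = ar g \<and> set xs \<subseteq> C \<and> length ys = n \<and> set ys \<subseteq> C \<longrightarrow>
        q n (f g xs) ys = f g (map (\<lambda>x. q n x ys) xs)"
    using ca unfolding clone_algebra_def by blast
  have "q n (f g (map (eval f (\<lambda>i. e (Suc i))) ts)) bs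
      = f g (map (\<lambda>x. q n x bs) (map (eval f (\<lambda>i. e (Suc i))) ts))"
    by (rule C6[rule_format]) (use Op.prems sub in auto)
  then have "q n (eval f (\<lambda>i. e (Suc i)) (Op g ts)) bs
      = f g (map (\<lambda>x. q n x bs) (map (eval f (\<lambda>i. e (Suc i))) ts))" by simp
  also have "map (\<lambda>x. q n x bs) (map (eval f (\<lambda>i. e (Suc i))) ts) = map (eval f (\<lambda>i. if i < n then bs ! i else e (Suc i))) ts"
    using Op by auto
  finally show ?case by simp
qed


lemma gen_term:
  "x \<in> gen_by_e ar f e \<Longrightarrow> \<exists>t. wf_trm ar t \<and> eval f (\<lambda>i. e (Suc i)) t = x"
proof (induction x rule: gen_by_e.induct)
  case (gen_e i)
  then have "Suc (i - 1) = i" by simp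
  then have "eval f (\<lambda>i. e (Suc i)) (V (i - 1)) = e i" by simp
  moreover have "wf_trm ar (V (i - 1))" by simp
  ultimately show ?case by blast
next
  case (gen_op xs g)
  define T where "T x = (SOME t. wf_trm ar t \<and> eval f (\<lambda>i. e (Suc i)) t = x)" for x
  have T: "wf_trm ar (T x) \<and> eval f (\<lambda>i. e (Suc i)) (T x) = x" if "x \<in> set xs" for x
    unfolding T_def by (rule someI_ex) (use gen_op that in blast)
  have "wf_trm ar (Op g (map T xs))" using T gen_op(1) by simp
  moreover have "map (eval f (\<lambda>i. e (Suc i))) (map T xs) = xs"
    using T by (simp add: map_idI)
  then have "eval f (\<lambda>i. e (Suc i)) (Op g (map T xs)) = f g xs" by simp
  ultimately show ?case by blast
qed

lemma gen_ground:
  "x \<in> gen_by_e ar f e \<Longrightarrow> \<exists>t. wf_trm (clone_ar ar) t \<and> ground t \<and> eval (clone_int f q e) env0 t = x"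
proof (induction x rule: gen_by_e.induct)
  case (gen_e i)
  then have "Suc (i - 1) = i" by simp
  then have "eval (clone_int f q e) env0 (Op (E (i - 1)) []) = e i" by simp
  moreover have "wf_trm (clone_ar ar) (Op (E (i - 1)) [])" by simp
  moreover have "ground (Op (E (i - 1)) [])" by simp
  ultimately show ?case by blast
next
  case (gen_op xs g)
  define T where "T x = (SOME t. wf_trm (clone_ar ar) t \<and> ground t \<and> eval (clone_int f q e) env0 t = x)" for x
  have T: "wf_trm (clone_ar ar) (T x) \<and> ground (T x) \<and> eval (clone_int f q e) env0 (T x) = x"
    if "x \<in> set xs" for x
    unfolding T_def by (rule someI_ex) (use gen_op that in blast)
  have "wf_trm (clone_ar ar) (Op (Sig g) (map T xs))" using T gen_op(1) by simp
  moreover have "ground (Op (Sig g) (map T xs))" using T by simp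
  moreover have "map (eval (clone_int f q e) env0) (map T xs) = xs"
    using T by (simp add: map_idI)
  then have "eval (clone_int f q e) env0 (Op (Sig g) (map T xs)) = f g xs" by simp
  ultimately show ?case by blast
qed

lemma sat_lemma:
  fixes C :: "'a set"
  assumes ca: "clone_algebra ar C f q e" and w: "wf_trm ar t1" "wf_trm ar t2"
    and eq: "eval f (\<lambda>i. e (Suc i)) t1 = eval f (\<lambda>i. e (Suc i)) t2"
  shows "satisfies C f t1 t2"
  unfolding satisfies_def
proof (intro allI impI)
  fix env :: "nat \<Rightarrow> 'a" assume env: "\<forall>i. env i \<in> C"
  define n where "n = bnd t1 + bnd t2"
  define bs where "bs = map env [0..<n]"
  define \<rho> where "\<rho> = (\<lambda>i. if i < n then bs ! i else e (Suc i))"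
  have lb: "length bs = n" and sb: "set bs \<subseteq> C" using env by (auto simp: bs_def)
  have r1: "eval f env t1 = eval f \<rho> t1"
    by (rule eval_bnd) (auto simp: \<rho>_def bs_def n_def)
  have r2: "eval f env t2 = eval f \<rho> t2"
    by (rule eval_bnd) (auto simp: \<rho>_def bs_def n_def)
  show "eval f env t1 = eval f env t2"
    using r1 r2 key[OF ca w(1) lb sb] key[OF ca w(2) lb sb] eq unfolding \<rho>_def by simp
qed


theorem theorem11p8:
  fixes ar :: "'f \<Rightarrow> nat"
    and C :: "'a set" and f :: "'f \<Rightarrow> 'a list \<Rightarrow> 'a"
    and q :: "nat \<Rightarrow> 'a \<Rightarrow> 'a list \<Rightarrow> 'a" and e :: "nat \<Rightarrow> 'a"
  assumes "minimal_clone_algebra ar C f q e"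
  shows
    \<comment> \<open>(i) C_tau is free over e_1, e_2, ... in Var(C_tau)\<close>
    "(in_Var ar C f C f \<and>
      (\<forall>(B :: 'b set) J (g :: nat \<Rightarrow> 'b). in_Var ar C f B J \<and> (\<forall>i\<ge>1. g i \<in> B) \<longrightarrow>
         (\<exists>h. hom ar C f B J h \<and> (\<forall>i\<ge>1. h (e i) = g i)) \<and>
         (\<forall>h h'. hom ar C f B J h \<and> (\<forall>i\<ge>1. h (e i) = g i) \<and>
                 hom ar C f B J h' \<and> (\<forall>i\<ge>1. h' (e i) = g i) \<longrightarrow> (\<forall>x\<in>C. h x = h' x))))
     \<and>
     \<comment> \<open>(ii) C is the clone Var(C_tau)-algebra (with e_i playing the role of v_i)\<close>
     (\<forall>n a bs. a \<in> C \<and> length bs = n \<and> set bs \<subseteq> C \<longrightarrow>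
        (\<exists>s. hom ar C f C f s \<and> (\<forall>i. 1 \<le> i \<and> i \<le> n \<longrightarrow> s (e i) = bs ! (i - 1))
                               \<and> (\<forall>i>n. s (e i) = e i)) \<and>
        (\<forall>s. hom ar C f C f s \<and> (\<forall>i. 1 \<le> i \<and> i \<le> n \<longrightarrow> s (e i) = bs ! (i - 1))
                               \<and> (\<forall>i>n. s (e i) = e i) \<longrightarrow> q n a bs = s a))
     \<and>
     \<comment> \<open>(iii) C is free over the empty set in Var(C)\<close>
     (in_Var (clone_ar ar) C (clone_int f q e) C (clone_int f q e) \<and>
      (\<forall>(B :: 'c set) J. in_Var (clone_ar ar) C (clone_int f q e) B J \<longrightarrow>
         (\<exists>h. hom (clone_ar ar) C (clone_int f q e) B J h) \<and>
         (\<forall>h h'. hom (clone_ar ar) C (clone_int f q e) B J h \<and>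
                 hom (clone_ar ar) C (clone_int f q e) B J h' \<longrightarrow> (\<forall>x\<in>C. h x = h' x))))"
proof -
  have ca: "clone_algebra ar C f q e" and CG: "C = gen_by_e ar f e"
    using assms unfolding minimal_clone_algebra_def by auto
  have alg: "algebra ar C f" using ca unfolding clone_algebra_def by (elim conjE) assumption
  have eC: "\<forall>i\<ge>1. e i \<in> C" using ca unfolding clone_algebra_def by (elim conjE) assumption
  have qC: "\<forall>n x ys. x \<in> C \<and> length ys = n \<and> set ys \<subseteq> C \<longrightarrow> q n x ys \<in> C"
    using ca unfolding clone_algebra_def by (elim conjE) assumption
  have C1: "\<forall>n i xs. length xs = n \<and> set xs \<subseteq> C \<and> 1 \<le> i \<and> i \<le> n \<longrightarrow> q n (e i) xs = xs ! (i - 1)"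
    using ca unfolding clone_algebra_def by (elim conjE) assumption
  have C2: "\<forall>n j xs. length xs = n \<and> set xs \<subseteq> C \<and> n < j \<longrightarrow> q n (e j) xs = e j"
    using ca unfolding clone_algebra_def by (elim conjE) assumption
  have C6: "\<forall>n g xs ys. length xs = ar g \<and> set xs \<subseteq> C \<and> length ys = n \<and> set ys \<subseteq> C \<longrightarrow>
        q n (f g xs) ys = f g (map (\<lambda>x. q n x ys) xs)"
    using ca unfolding clone_algebra_def by (elim conjE) assumption
  have eS: "\<forall>i. e (Suc i) \<in> C" using eC by simp
  have P1: "in_Var ar C f C f" using alg unfolding in_Var_def by blast
  have P2: "(\<exists>h. hom ar C f B J h \<and> (\<forall>i\<ge>1. h (e i) = g i)) \<and>
         (\<forall>h h'. hom ar C f B J h \<and> (\<forall>i\<ge>1. h (e i) = g i) \<and>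
                 hom ar C f B J h' \<and> (\<forall>i\<ge>1. h' (e i) = g i) \<longrightarrow> (\<forall>x\<in>C. h x = h' x))"
    if V: "in_Var ar C f B J" and gB: "\<forall>i\<ge>1. g i \<in> B" for B :: "'b set" and J g
  proof
    have algB: "algebra ar B J" using V unfolding in_Var_def by (elim conjE) assumption
    have gS: "\<forall>i. g (Suc i) \<in> B" by (intro allI gB[rule_format]) simp
    define T where "T x = (SOME t. wf_trm ar t \<and> eval f (\<lambda>i. e (Suc i)) t = x)" for x
    define h where "h x = eval J (\<lambda>i. g (Suc i)) (T x)" for x
    have T: "wf_trm ar (T x) \<and> eval f (\<lambda>i. e (Suc i)) (T x) = x" if "x \<in> C" for x
      unfolding T_def by (rule someI_ex) (use gen_term[of x ar f e] that CG in blast)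
    have hval: "h x = eval J (\<lambda>i. g (Suc i)) t"
      if "wf_trm ar t" "x = eval f (\<lambda>i. e (Suc i)) t" for t x
    proof -
      have xC: "x \<in> C" using that eval_closed[OF alg that(1) eS] by simp
      have s1: "satisfies C f (T x) t" by (rule sat_lemma[OF ca]) (use T[OF xC] that in auto)
      have VV: "\<forall>s t. wf_trm ar s \<and> wf_trm ar t \<and> satisfies C f s t \<longrightarrow> satisfies B J s t"
        using V unfolding in_Var_def by (elim conjE) assumption
      have s2: "satisfies B J (T x) t" using VV T[OF xC] that(1) s1 by blast
      then show ?thesis using spec[OF s2[unfolded satisfies_def], of "\<lambda>i. g (Suc i)"] gS
        unfolding h_def by simp
    qed
    have hom: "hom ar C f B J h"
      unfolding hom_def
    proof (intro conjI allI impI ballI)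
      fix x assume "x \<in> C"
      then show "h x \<in> B" unfolding h_def using eval_closed[OF algB _ gS] T by blast
    next
      fix g' xs assume a: "length xs = ar g' \<and> set xs \<subseteq> C"
      have tT: "\<forall>x\<in>set xs. wf_trm ar (T x) \<and> eval f (\<lambda>i. e (Suc i)) (T x) = x" using T a by blast
      have w: "wf_trm ar (Op g' (map T xs))" using a tT by auto
      have ev: "f g' xs = eval f (\<lambda>i. e (Suc i)) (Op g' (map T xs))" using tT by (simp add: map_idI)
      have "h (f g' xs) = J g' (map (eval J (\<lambda>i. g (Suc i))) (map T xs))"
        using hval[OF w ev] by simp
      also have "\<dots> = J g' (map h xs)" by (simp add: h_def[abs_def] comp_def)
      finally show "h (f g' xs) = J g' (map h xs)" .
    qed
    have he: "\<forall>i\<ge>1. h (e i) = g i"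
    proof (intro allI impI)
      fix i :: nat assume "1 \<le> i"
      then have "e i = eval f (\<lambda>i. e (Suc i)) (V (i - 1))" by simp
      from hval[OF _ this] \<open>1 \<le> i\<close> show "h (e i) = g i" by simp
    qed
    show "\<exists>h. hom ar C f B J h \<and> (\<forall>i\<ge>1. h (e i) = g i)" using hom he by blast
  next
    show "\<forall>h h'. hom ar C f B J h \<and> (\<forall>i\<ge>1. h (e i) = g i) \<and>
                 hom ar C f B J h' \<and> (\<forall>i\<ge>1. h' (e i) = g i) \<longrightarrow> (\<forall>x\<in>C. h x = h' x)"
    proof (intro allI impI ballI)
      fix h h' x assume H: "hom ar C f B J h \<and> (\<forall>i\<ge>1. h (e i) = g i) \<and>
                 hom ar C f B J h' \<and> (\<forall>i\<ge>1. h' (e i) = g i)" and x: "x \<in> C"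
      show "h x = h' x"
        by (rule hom_unique[of ar f e B J h h']) (use H x CG in auto)
    qed
  qed
  have P3: "(\<exists>s. hom ar C f C f s \<and> (\<forall>i. 1 \<le> i \<and> i \<le> n \<longrightarrow> s (e i) = bs ! (i - 1))
                               \<and> (\<forall>i>n. s (e i) = e i)) \<and>
        (\<forall>s. hom ar C f C f s \<and> (\<forall>i. 1 \<le> i \<and> i \<le> n \<longrightarrow> s (e i) = bs ! (i - 1))
                               \<and> (\<forall>i>n. s (e i) = e i) \<longrightarrow> q n a bs = s a)"
    if a: "a \<in> C \<and> length bs = n \<and> set bs \<subseteq> C" for n a bs
  proof -
    have hq: "hom ar C f C f (\<lambda>x. q n x bs)"
      unfolding hom_def
    proof (intro conjI ballI allI impI)
      fix x assume "x \<in> C"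
      then show "q n x bs \<in> C" by (intro qC[rule_format]) (use a in auto)
    next
      fix g xs assume "length xs = ar g \<and> set xs \<subseteq> C"
      then show "q n (f g xs) bs = f g (map (\<lambda>x. q n x bs) xs)"
        by (intro C6[rule_format]) (use a in auto)
    qed
    have e1: "\<forall>i. 1 \<le> i \<and> i \<le> n \<longrightarrow> q n (e i) bs = bs ! (i - 1)"
      by (intro allI impI C1[rule_format]) (use a in auto)
    have e2: "\<forall>i>n. q n (e i) bs = e i"
      by (intro allI impI C2[rule_format]) (use a in auto)
    have "q n a bs = s a" if "hom ar C f C f s" "\<forall>i. 1 \<le> i \<and> i \<le> n \<longrightarrow> s (e i) = bs ! (i - 1)"
       "\<forall>i>n. s (e i) = e i" for s
    proof -
      have ee: "\<forall>i\<ge>1. q n (e i) bs = s (e i)"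
      proof (intro allI impI)
        fix i :: nat assume "1 \<le> i"
        then show "q n (e i) bs = s (e i)" by (cases "i \<le> n") (use e1 e2 that(2,3) in auto)
      qed
      show ?thesis
        by (rule hom_unique[of ar f e C f "\<lambda>x. q n x bs" s a]) (use ee hq that(1) a CG in auto)
    qed
    then show ?thesis using hq e1 e2 by blast
  qed
  have algC: "algebra (clone_ar ar) C (clone_int f q e)"
    unfolding algebra_def
  proof (intro conjI allI impI)
    show "C \<noteq> {}" using eC by auto
  next
    fix op :: "'f clone_op" and xs assume a: "length xs = clone_ar ar op \<and> set xs \<subseteq> C"
    show "clone_int f q e op xs \<in> C"
    proof (cases op)
      case (Sig g) then show ?thesis using alg a unfolding algebra_def by auto
    next
      case (Q n)
      then obtain x ys where xs: "xs = x # ys" using a by (cases xs) auto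
      then show ?thesis using Q a qC by auto
    next
      case (E k) then show ?thesis using eS by simp
    qed
  qed
  have P4: "in_Var (clone_ar ar) C (clone_int f q e) C (clone_int f q e)"
    using algC unfolding in_Var_def by blast
  have P5: "(\<exists>h. hom (clone_ar ar) C (clone_int f q e) B J h) \<and>
         (\<forall>h h'. hom (clone_ar ar) C (clone_int f q e) B J h \<and>
                 hom (clone_ar ar) C (clone_int f q e) B J h' \<longrightarrow> (\<forall>x\<in>C. h x = h' x))"
    if V: "in_Var (clone_ar ar) C (clone_int f q e) B J" for B :: "'c set" and J
  proof
    have algB: "algebra (clone_ar ar) B J" using V unfolding in_Var_def by (elim conjE) assumption
    have "B \<noteq> {}" using algB unfolding algebra_def by (elim conjE) assumption
    then obtain b where b: "b \<in> B" by blast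
    define env0 :: "nat \<Rightarrow> 'a" where "env0 = (\<lambda>_. e 1)"
    define T where "T x = (SOME t. wf_trm (clone_ar ar) t \<and> ground t \<and> eval (clone_int f q e) env0 t = x)" for x
    define h where "h x = eval J (\<lambda>_. b) (T x)" for x
    have T: "wf_trm (clone_ar ar) (T x) \<and> ground (T x) \<and> eval (clone_int f q e) env0 (T x) = x"
      if "x \<in> C" for x
      unfolding T_def by (rule someI_ex) (use gen_ground[of x ar f e q env0] that CG in blast)
    have hval: "h x = eval J (\<lambda>_. b) t"
      if "wf_trm (clone_ar ar) t" "ground t" "x = eval (clone_int f q e) env0 t" "x \<in> C" for t x
    proof -
      have s1: "satisfies C (clone_int f q e) (T x) t"
        unfolding satisfies_def
      proof (intro allI impI)
        fix env :: "nat \<Rightarrow> 'a"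
        have "eval (clone_int f q e) env (T x) = eval (clone_int f q e) env0 (T x)"
          using T[OF that(4)] eval_ground by blast
        also have "\<dots> = eval (clone_int f q e) env0 t" using T[OF that(4)] that(3) by simp
        also have "\<dots> = eval (clone_int f q e) env t" using that(2) eval_ground by blast
        finally show "eval (clone_int f q e) env (T x) = eval (clone_int f q e) env t" .
      qed
      have VV: "\<forall>s t. wf_trm (clone_ar ar) s \<and> wf_trm (clone_ar ar) t \<and> satisfies C (clone_int f q e) s t \<longrightarrow> satisfies B J s t"
        using V unfolding in_Var_def by (elim conjE) assumption
      have s2: "satisfies B J (T x) t" using VV T[OF that(4)] that(1) s1 by blast
      then show ?thesis using spec[OF s2[unfolded satisfies_def], of "\<lambda>_. b"] b
        unfolding h_def by simp
    qed
    have hom: "hom (clone_ar ar) C (clone_int f q e) B J h"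
      unfolding hom_def
    proof (intro conjI allI impI ballI)
      fix x assume "x \<in> C"
      then show "h x \<in> B" unfolding h_def using eval_closed[OF algB, of _ "\<lambda>_. b"] b T by blast
    next
      fix op xs assume a: "length xs = clone_ar ar op \<and> set xs \<subseteq> C"
      have tT: "\<forall>x\<in>set xs. wf_trm (clone_ar ar) (T x) \<and> ground (T x) \<and> eval (clone_int f q e) env0 (T x) = x"
        using T a by blast
      have w: "wf_trm (clone_ar ar) (Op op (map T xs))" using a tT by auto
      have g: "ground (Op op (map T xs))" using tT by auto
      have ev: "clone_int f q e op xs = eval (clone_int f q e) env0 (Op op (map T xs))"
        using tT by (simp add: map_idI)
      have inC: "clone_int f q e op xs \<in> C" using algC a unfolding algebra_def by blast
      have "h (clone_int f q e op xs) = J op (map (eval J (\<lambda>_. b)) (map T xs))"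
        using hval[OF w g ev inC] by simp
      also have "\<dots> = J op (map h xs)" by (simp add: h_def[abs_def] comp_def)
      finally show "h (clone_int f q e op xs) = J op (map h xs)" .
    qed
    show "\<exists>h. hom (clone_ar ar) C (clone_int f q e) B J h" using hom by blast
  next
    show "\<forall>h h'. hom (clone_ar ar) C (clone_int f q e) B J h \<and>
                 hom (clone_ar ar) C (clone_int f q e) B J h' \<longrightarrow> (\<forall>x\<in>C. h x = h' x)"
    proof (intro allI impI ballI)
      fix h h' x assume hh: "hom (clone_ar ar) C (clone_int f q e) B J h \<and>
                 hom (clone_ar ar) C (clone_int f q e) B J h'" and x: "x \<in> C"
      from x[unfolded CG] show "h x = h' x"
      proof (induction x rule: gen_by_e.induct)
        case (gen_e i)
        have "e i = clone_int f q e (E (i - 1)) []" using gen_e by simp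
        then show ?case using hh unfolding hom_def
          by (metis clone_ar.simps(3) empty_subsetI list.map(1) list.set(1) list.size(3))
      next
        case (gen_op xs g)
        have s: "set xs \<subseteq> C" using gen_op CG by auto
        have "h (f g xs) = J (Sig g) (map h xs)"
          using hh gen_op s unfolding hom_def by (metis clone_ar.simps(1) clone_int.simps(1))
        also have "map h xs = map h' xs" using gen_op by auto
        also have "J (Sig g) (map h' xs) = h' (f g xs)"
          using hh gen_op s unfolding hom_def by (metis clone_ar.simps(1) clone_int.simps(1))
        finally show ?case .
      qed
    qed
  qed
  have P2': "\<forall>(B :: 'b set) J (g :: nat \<Rightarrow> 'b). in_Var ar C f B J \<and> (\<forall>i\<ge>1. g i \<in> B) \<longrightarrow>
         (\<exists>h. hom ar C f B J h \<and> (\<forall>i\<ge>1. h (e i) = g i)) \<and>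
         (\<forall>h h'. hom ar C f B J h \<and> (\<forall>i\<ge>1. h (e i) = g i) \<and>
                 hom ar C f B J h' \<and> (\<forall>i\<ge>1. h' (e i) = g i) \<longrightarrow> (\<forall>x\<in>C. h x = h' x))"
  proof (intro allI impI)
    fix B :: "'b set" and J and g :: "nat \<Rightarrow> 'b" assume "in_Var ar C f B J \<and> (\<forall>i\<ge>1. g i \<in> B)"
    then show "(\<exists>h. hom ar C f B J h \<and> (\<forall>i\<ge>1. h (e i) = g i)) \<and>
         (\<forall>h h'. hom ar C f B J h \<and> (\<forall>i\<ge>1. h (e i) = g i) \<and>
                 hom ar C f B J h' \<and> (\<forall>i\<ge>1. h' (e i) = g i) \<longrightarrow> (\<forall>x\<in>C. h x = h' x))"
      by (elim conjE) (rule P2)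
  qed
  have P3': "\<forall>n a bs. a \<in> C \<and> length bs = n \<and> set bs \<subseteq> C \<longrightarrow>
        (\<exists>s. hom ar C f C f s \<and> (\<forall>i. 1 \<le> i \<and> i \<le> n \<longrightarrow> s (e i) = bs ! (i - 1))
                               \<and> (\<forall>i>n. s (e i) = e i)) \<and>
        (\<forall>s. hom ar C f C f s \<and> (\<forall>i. 1 \<le> i \<and> i \<le> n \<longrightarrow> s (e i) = bs ! (i - 1))
                               \<and> (\<forall>i>n. s (e i) = e i) \<longrightarrow> q n a bs = s a)"
    by (intro allI impI) (rule P3)
  have P5': "\<forall>(B :: 'c set) J. in_Var (clone_ar ar) C (clone_int f q e) B J \<longrightarrow>
         (\<exists>h. hom (clone_ar ar) C (clone_int f q e) B J h) \<and>
         (\<forall>h h'. hom (clone_ar ar) C (clone_int f q e) B J h \<and>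
                 hom (clone_ar ar) C (clone_int f q e) B J h' \<longrightarrow> (\<forall>x\<in>C. h x = h' x))"
    by (intro allI impI) (rule P5)
  show ?thesis
    by (intro conjI P1 P2' P3' P4 P5')
qed

end
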